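(* Suppose $X$ is spike-free. Let $(W_1,w_2,\lambda)$ be a KKT point (B-subdifferential sense) of the non-convex max-margin problem, and suppose it contains two neurons $i_+,i_-$ with $w_{2,i_\pm}\ne0$ whose associated diagonal matrices satisfy $\hat D_{i_+}\ge\mathrm{diag}(\mathbb I(y=1))$ and $\hat D_{i_-}\ge\mathrm{diag}(\mathbb I(y=-1))$. Then $\lambda$ is dual feasible, i.e. $\max_{u:\|u\|_2\le1}|\lambda^T(Xu)_+|\le1$.
   Context: Binary setting: $X\in\mathbb R^{N\times d}$ rows $x_n$, $y\in\{\pm1\}^N$, $Y=\mathrm{diag}(y)$. $X$ is spike-free if for every $u$ with $\|u\|_2\le1$ there is $z$ with $\|z\|_2\le1$ and $(Xu)_+=Xz$. Non-convex max-margin problem: $\min\frac12(\|W_1\|_F^2+\|w_2\|_2^2)$ s.t. $Y(XW_1)_+w_2\ge\mathbf 1$. KKT point (B-subdifferential): $Y\lambda\ge0$, primal feasibility, $\lambda_n(y_n(x_n^TW_1)_+w_2-1)=0$, $w_2=(XW_1)_+^T\lambda$, and for each $i$, $w_{1,i}=w_{2,i}X^T\hat D_i\lambda$ where $\hat D_i$ is diagonal with $(\hat D_i)_{nn}=1$ if $x_n^Tw_{1,i}>0$, $0$ if $x_n^Tw_{1,i}<0$, $\in\{0,1\}$ if $x_n^Tw_{1,i}=0$. *)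

theory Defs
  imports "HOL-Analysis.Analysis"
begin

text \<open>Samples indexed by finite type 'n (N = CARD('n)), features by 'd, neurons by 'm.
  X :: real^'d^'n has rows x_n = X $ n. W1 :: real^'m^'d, its i-th column w_{1,i} = column i W1.\<close>

definition relu_vec :: "real^'k \<Rightarrow> real^'k" where
  "relu_vec v = (\<chi> k. max 0 (v $ k))"

definition relu_mat :: "real^'j^'k \<Rightarrow> real^'j^'k" where
  "relu_mat A = (\<chi> k j. max 0 (A $ k $ j))"

definition spike_free :: "real^'d^'n \<Rightarrow> bool" where
  "spike_free X \<longleftrightarrow>
     (\<forall>u. norm u \<le> 1 \<longrightarrow> (\<exists>z. norm z \<le> 1 \<and> relu_vec (X *v u) = X *v z))"

text \<open>Diagonal matrices \<open>\<hat>D_i\<close> are represented by their diagonals \<open>D i :: 'n \<Rightarrow> real\<close>.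
  B-subdifferential KKT point of  min 1/2(||W1||_F^2 + ||w2||^2)  s.t.  Y (X W1)_+ w2 \<ge> 1,
  with the diagonal matrices D i witnessing the stationarity condition for W1.\<close>

definition KKT_point ::
  "real^'d^'n \<Rightarrow> ('n \<Rightarrow> real) \<Rightarrow> real^'m^'d \<Rightarrow> real^'m \<Rightarrow> real^'n \<Rightarrow> ('m \<Rightarrow> 'n \<Rightarrow> real) \<Rightarrow> bool"
  where
  "KKT_point X y W1 w2 lam D \<longleftrightarrow>
     (\<forall>n. y n * lam $ n \<ge> 0) \<and>
     (\<forall>n. y n * (relu_mat (X ** W1) $ n \<bullet> w2) \<ge> 1) \<and>
     (\<forall>n. lam $ n * (y n * (relu_mat (X ** W1) $ n \<bullet> w2) - 1) = 0) \<and>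
     w2 = transpose (relu_mat (X ** W1)) *v lam \<and>
     (\<forall>i n. (X $ n \<bullet> column i W1 > 0 \<longrightarrow> D i n = 1) \<and>
            (X $ n \<bullet> column i W1 < 0 \<longrightarrow> D i n = 0) \<and>
            (X $ n \<bullet> column i W1 = 0 \<longrightarrow> D i n \<in> {0, 1})) \<and>
     (\<forall>i. column i W1 = (w2 $ i) *\<^sub>R (transpose X *v (\<chi> n. D i n * lam $ n)))"

end

theory Submission
  imports Defs
begin

lemma adj: "inner (transpose (X::real^'d^'n) *v v) c = inner v (X *v c)"
  by (simp add: dot_lmul_matrix)

lemma neuron_norm:
  fixes X :: "real^'d^'n" and y :: "'n \<Rightarrow> real"
    and W1 :: "real^'m^'d" and w2 :: "real^'m" and lam :: "real^'n"
    and D :: "'m \<Rightarrow> 'n \<Rightarrow> real" and i :: 'm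
  assumes kkt: "KKT_point X y W1 w2 lam D" and nz: "w2 $ i \<noteq> 0"
  shows "norm (transpose X *v (\<chi> n. D i n * lam $ n)) \<le> 1"
proof -
  define c where "c = column i W1"
  define g where "g = transpose X *v (\<chi> n. D i n * lam $ n)"
  have cg: "c = (w2 $ i) *\<^sub>R g" using kkt unfolding KKT_point_def c_def g_def by blast
  have Dn: "D i n * (X $ n \<bullet> c) = max 0 (X $ n \<bullet> c)" for n
  proof -
    have h: "(X $ n \<bullet> c > 0 \<longrightarrow> D i n = 1) \<and> (X $ n \<bullet> c < 0 \<longrightarrow> D i n = 0) \<and>
            (X $ n \<bullet> c = 0 \<longrightarrow> D i n \<in> {0, 1})"
      using kkt unfolding KKT_point_def c_def by blast
    show ?thesis using h by (cases "X $ n \<bullet> c > 0"; cases "X $ n \<bullet> c < 0"; auto)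
  qed
  have XW: "(X ** W1) $ n $ i = X $ n \<bullet> c" for n
    by (simp add: matrix_matrix_mult_def c_def column_def inner_vec_def)
  have w2i: "w2 $ i = (\<Sum>n\<in>UNIV. max 0 (X $ n \<bullet> c) * lam $ n)"
  proof -
    have "w2 = transpose (relu_mat (X ** W1)) *v lam" using kkt unfolding KKT_point_def by blast
    then have "w2 $ i = (\<Sum>n\<in>UNIV. relu_mat (X ** W1) $ n $ i * lam $ n)"
      by (simp add: matrix_vector_mult_def transpose_def)
    then show ?thesis by (simp add: relu_mat_def XW)
  qed
  have gc: "inner g c = w2 $ i"
  proof -
    have "inner g c = inner (\<chi> n. D i n * lam $ n) (X *v c)" unfolding g_def by (rule adj)
    also have "\<dots> = (\<Sum>n\<in>UNIV. D i n * lam $ n * (X $ n \<bullet> c))"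
      by (simp add: inner_vec_def matrix_mult_dot)
    also have "\<dots> = (\<Sum>n\<in>UNIV. max 0 (X $ n \<bullet> c) * lam $ n)"
      by (rule sum.cong) (auto simp: Dn[symmetric] algebra_simps)
    finally show ?thesis using w2i by simp
  qed
  have "inner c c = (w2 $ i) * (w2 $ i)"
    using gc by (simp add: cg inner_commute)
  moreover have "inner c c = (w2 $ i) * (w2 $ i) * inner g g"
    by (simp add: cg)
  ultimately have "inner g g = 1" using nz by simp
  then have "norm g = 1" by (simp add: norm_eq_sqrt_inner)
  then show ?thesis unfolding g_def by simp
qed

theorem proposition5:
  fixes X :: "real^'d^'n" and y :: "'n \<Rightarrow> real"
    and W1 :: "real^'m^'d" and w2 :: "real^'m" and lam :: "real^'n"
    and D :: "'m \<Rightarrow> 'n \<Rightarrow> real" and ip im :: 'm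
  assumes y_pm: "\<forall>n. y n = 1 \<or> y n = -1"
    and sf: "spike_free X"
    and kkt: "KKT_point X y W1 w2 lam D"
    and ip_nz: "w2 $ ip \<noteq> 0" and im_nz: "w2 $ im \<noteq> 0"
    and Dp: "\<forall>n. D ip n \<ge> (if y n = 1 then 1 else 0)"
    and Dm: "\<forall>n. D im n \<ge> (if y n = -1 then 1 else 0)"
  shows "\<forall>u::real^'d. norm u \<le> 1 \<longrightarrow> \<bar>lam \<bullet> relu_vec (X *v u)\<bar> \<le> 1"
proof (intro allI impI)
  fix u :: "real^'d" assume u: "norm u \<le> 1"
  obtain z where z: "norm z \<le> 1" and rz: "relu_vec (X *v u) = X *v z"
    using sf u unfolding spike_free_def by blast
  define v where "v = X *v z"
  have vpos: "v $ n \<ge> 0" for n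
    using rz unfolding v_def[symmetric] by (metis relu_vec_def vec_lambda_beta max.cobounded1)
  have ylam: "y n * lam $ n \<ge> 0" for n using kkt unfolding KKT_point_def by blast
  have D01: "D i n \<in> {0,1}" for i n
  proof -
    have "(X $ n \<bullet> column i W1 > 0 \<longrightarrow> D i n = 1) \<and> (X $ n \<bullet> column i W1 < 0 \<longrightarrow> D i n = 0) \<and>
            (X $ n \<bullet> column i W1 = 0 \<longrightarrow> D i n \<in> {0, 1})"
      using kkt unfolding KKT_point_def by blast
    then show ?thesis by (cases "X $ n \<bullet> column i W1 > 0"; cases "X $ n \<bullet> column i W1 < 0"; auto)
  qed
  define ap where "ap = (\<chi> n. D ip n * lam $ n)"
  define am where "am = (\<chi> n. D im n * lam $ n)"
  have up: "inner lam v \<le> inner ap v"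
    unfolding inner_vec_def ap_def
  proof (rule sum_mono)
    fix n
    have "lam $ n * v $ n \<le> D ip n * lam $ n * v $ n"
    proof (cases "y n = 1")
      case True
      then have "D ip n = 1" using Dp[rule_format, of n] D01[of ip n] by auto
      then show ?thesis by simp
    next
      case False then have "y n = -1" using y_pm by blast
      then have "lam $ n \<le> 0" using ylam[of n] by simp
      then have "(1 - D ip n) * (lam $ n * v $ n) \<le> 0"
        using D01[of ip n] vpos[of n] by (auto simp: mult_nonpos_nonneg)
      then show ?thesis by (simp add: algebra_simps)
    qed
    then show "lam $ n \<bullet> v $ n \<le> (\<chi> n. D ip n * lam $ n) $ n \<bullet> v $ n" by simp
  qed
  have lo: "inner am v \<le> inner lam v"
    unfolding inner_vec_def am_def
  proof (rule sum_mono)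
    fix n
    have "D im n * lam $ n * v $ n \<le> lam $ n * v $ n"
    proof (cases "y n = -1")
      case True
      then have "D im n = 1" using Dm[rule_format, of n] D01[of im n] by auto
      then show ?thesis by simp
    next
      case False then have "y n = 1" using y_pm by blast
      then have "lam $ n \<ge> 0" using ylam[of n] by simp
      then have "(1 - D im n) * (lam $ n * v $ n) \<ge> 0"
        using D01[of im n] vpos[of n] by auto
      then show ?thesis by (simp add: algebra_simps)
    qed
    then show "(\<chi> n. D im n * lam $ n) $ n \<bullet> v $ n \<le> lam $ n \<bullet> v $ n" by simp
  qed
  have np: "norm (transpose X *v ap) \<le> 1"
    unfolding ap_def using neuron_norm[OF kkt ip_nz] .
  have nm: "norm (transpose X *v am) \<le> 1"
    unfolding am_def using neuron_norm[OF kkt im_nz] .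
  have "inner ap v = inner (transpose X *v ap) z" unfolding v_def by (simp only: adj)
  also have "\<dots> \<le> norm (transpose X *v ap) * norm z" by (rule norm_cauchy_schwarz)
  also have "\<dots> \<le> 1" using np z by (simp add: mult_le_one)
  finally have A: "inner ap v \<le> 1" .
  have "- inner am v = inner (- (transpose X *v am)) z" unfolding v_def inner_minus_left by (simp only: adj)
  also have "\<dots> \<le> norm (- (transpose X *v am)) * norm z" by (rule norm_cauchy_schwarz)
  also have "\<dots> \<le> 1" using nm z by (simp add: mult_le_one)
  finally have B: "- inner am v \<le> 1" .
  show "\<bar>lam \<bullet> relu_vec (X *v u)\<bar> \<le> 1"
    using A B up lo unfolding rz v_def[symmetric] by linarith
qed

end
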